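(* Let $n>1$ and let $\mathbf M_n=(M_n,\vee,\wedge,0,1)$ be the lattice with $M_n=\{0,a_1,\dots,a_n,1\}$, where $a_1,\dots,a_n$ are pairwise incomparable atoms and coatoms. Then for all $a,b,c\in M_n$: $a\wedge b\le c$ if and only if $\{a\}\le_1 b\to c$.
   Context: For $a\in L$, $a^+:=\{x\in L\mid a\vee x=1,\ a\wedge x=0\}$ (the set of all complements of $a$). For $a,b\in L$, $a\to b:=\{x\vee(a\wedge b)\mid x\in a^+\}$. For $A,B\subseteq L$, $A\le_1B$ means that for every $x\in A$ there exists $y\in B$ with $x\le y$. *)

theory Defs
  imports Main
begin

text \<open>The lattice M_n: elements 0 (Bot), atoms a_1..a_n (At i, 1 \<le> i \<le> n), 1 (Top).
  The operations below are defined on the whole datatype; the carrier of M_n is Mn n.\<close>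

datatype mn = Bot | At nat | Top

definition Mn :: "nat \<Rightarrow> mn set" where
  "Mn n = {Bot, Top} \<union> At ` {1..n}"

fun mle :: "mn \<Rightarrow> mn \<Rightarrow> bool" where
  "mle Bot _ = True"
| "mle _ Top = True"
| "mle (At i) (At j) = (i = j)"
| "mle _ _ = False"

fun mjoin :: "mn \<Rightarrow> mn \<Rightarrow> mn" where
  "mjoin Bot y = y"
| "mjoin x Bot = x"
| "mjoin (At i) (At j) = (if i = j then At i else Top)"
| "mjoin _ _ = Top"

fun mmeet :: "mn \<Rightarrow> mn \<Rightarrow> mn" where
  "mmeet Top y = y"
| "mmeet x Top = x"
| "mmeet (At i) (At j) = (if i = j then At i else Bot)"
| "mmeet _ _ = Bot"

definition compl_set :: "nat \<Rightarrow> mn \<Rightarrow> mn set" where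
  "compl_set n a = {x \<in> Mn n. mjoin a x = Top \<and> mmeet a x = Bot}"

definition arrow :: "nat \<Rightarrow> mn \<Rightarrow> mn \<Rightarrow> mn set" where
  "arrow n a b = {mjoin x (mmeet a b) | x. x \<in> compl_set n a}"

definition le1 :: "mn set \<Rightarrow> mn set \<Rightarrow> bool" where
  "le1 A B \<longleftrightarrow> (\<forall>x\<in>A. \<exists>y\<in>B. mle x y)"

end

theory Submission
  imports Defs
begin

lemma cs_bot: "compl_set n Bot = {Top}"
  unfolding compl_set_def Mn_def by (auto elim: mjoin.elims)

lemma cs_top: "compl_set n Top = {Bot}"
  unfolding compl_set_def Mn_def by (auto elim: mmeet.elims)

lemma cs_at: "compl_set n (At i) = At ` ({1..n} - {i})"
  unfolding compl_set_def Mn_def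
  apply (rule set_eqI)
  subgoal for x by (cases x) auto
  done

lemma other: "n > 1 \<Longrightarrow> \<exists>j\<in>{1..n}. j \<noteq> (i::nat)"
proof (cases "i = 1")
  case True assume "n > 1" then show ?thesis using True by (intro bexI[of _ 2]) auto
qed (intro bexI[of _ 1], auto)

theorem proposition5:
  fixes n :: nat
  assumes "n > 1"
  shows "\<forall>a\<in>Mn n. \<forall>b\<in>Mn n. \<forall>c\<in>Mn n.
           mle (mmeet a b) c \<longleftrightarrow> le1 {a} (arrow n b c)"
proof (intro ballI)
  fix a b c assume a: "a \<in> Mn n" and b: "b \<in> Mn n" and c: "c \<in> Mn n"
  show "mle (mmeet a b) c \<longleftrightarrow> le1 {a} (arrow n b c)"
  proof (cases b)
    case Bot
    then show ?thesis by (cases a; cases c) (auto simp: arrow_def cs_bot le1_def)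
  next
    case Top
    then show ?thesis by (cases a; cases c) (auto simp: arrow_def cs_top le1_def)
  next
    case (At i)
    have e: "le1 {a} (arrow n b c) \<longleftrightarrow>
       (\<exists>j\<in>{1..n}. j \<noteq> i \<and> mle a (mjoin (At j) (mmeet (At i) c)))"
      by (auto simp: At arrow_def cs_at le1_def)
    obtain j where j: "j \<in> {1..n}" "j \<noteq> i" using other[OF assms] by blast
    show ?thesis unfolding e using a c j
      by (cases a; cases c) (auto simp: At Mn_def)
  qed
qed

end
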